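(* Let $H=(V,E,C,\ell)$ be an edge-colored graph with $k$ colors, $x$ a feasible solution of the \textsc{MinECC} LP relaxation, $e=\{u,v\}\in E$ an edge with color $c=\ell(e)$ and $x_e=\max\{x_u^c,x_v^c\}$, and let $z_0\le z_1\le\dots\le z_{k-1}$ be the color thresholds of $e$. Then for every integer $t$ with $1\le t\le\frac k2$, $$t\le x_e+z_t+z_{t+1}+\cdots+z_{2t-1}.$$
   Context: The \textsc{MinECC} LP relaxation for an edge-colored hypergraph $H=(V,E,C,\ell)$ with colors $C=[k]$ has constraints $\sum_{i=1}^k x_v^i=k-1$ for all $v\in V$; $x_e\ge x_w^{\ell(e)}$ for all $e\in E$, $w\in e$; $0\le x_w^i\le 1$; $0\le x_e\le 1$. An edge-colored graph is one in which every edge has exactly two nodes. Color thresholds of an edge $e$ with color $c$: for $j\in C\setminus\{c\}$ let $m_j=\min_{w\in e}x_w^j$, and let $m_{(1)}\le m_{(2)}\le\dots\le m_{(k-1)}$ be these $k-1$ values sorted in nondecreasing order. Set $z_0=0$ and $z_i=m_{(i)}$ for $1\le i\le k-1$. Equivalently, $z_i$ is the smallest nonnegative value such that for every $\rho>z_i$ there are at least $i$ distinct colors $j\ne c$ for which some $w\in e$ has $x_w^j<\rho$. *)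

theory Defs
  imports Complex_Main
begin

(* Edges are abstract identifiers of type 'e; nodes e is the node set of edge e
   (this allows parallel edges).  x v i is the LP variable x_v^i, xe e is x_e. *)

definition edge_colored_hypergraph ::
  "'v set \<Rightarrow> 'e set \<Rightarrow> ('e \<Rightarrow> 'v set) \<Rightarrow> nat \<Rightarrow> ('e \<Rightarrow> nat) \<Rightarrow> bool" where
  "edge_colored_hypergraph V E nodes k l \<longleftrightarrow>
     finite V \<and> finite E \<and>
     (\<forall>e\<in>E. nodes e \<subseteq> V \<and> nodes e \<noteq> {} \<and> l e \<in> {1..k})"

definition edge_colored_graph ::
  "'v set \<Rightarrow> 'e set \<Rightarrow> ('e \<Rightarrow> 'v set) \<Rightarrow> nat \<Rightarrow> ('e \<Rightarrow> nat) \<Rightarrow> bool" where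
  "edge_colored_graph V E nodes k l \<longleftrightarrow>
     edge_colored_hypergraph V E nodes k l \<and> (\<forall>e\<in>E. card (nodes e) = 2)"

definition minecc_lp_feasible ::
  "'v set \<Rightarrow> 'e set \<Rightarrow> ('e \<Rightarrow> 'v set) \<Rightarrow> nat \<Rightarrow> ('e \<Rightarrow> nat)
     \<Rightarrow> ('v \<Rightarrow> nat \<Rightarrow> real) \<Rightarrow> ('e \<Rightarrow> real) \<Rightarrow> bool" where
  "minecc_lp_feasible V E nodes k l x xe \<longleftrightarrow>
     (\<forall>v\<in>V. (\<Sum>i=1..k. x v i) = real k - 1) \<and>
     (\<forall>e\<in>E. \<forall>w\<in>nodes e. xe e \<ge> x w (l e)) \<and>
     (\<forall>w\<in>V. \<forall>i\<in>{1..k}. 0 \<le> x w i \<and> x w i \<le> 1) \<and>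
     (\<forall>e\<in>E. 0 \<le> xe e \<and> xe e \<le> 1)"

definition color_min :: "('e \<Rightarrow> 'v set) \<Rightarrow> ('v \<Rightarrow> nat \<Rightarrow> real) \<Rightarrow> 'e \<Rightarrow> nat \<Rightarrow> real" where
  "color_min nodes x e j = Min ((\<lambda>w. x w j) ` nodes e)"

definition color_threshold ::
  "('e \<Rightarrow> 'v set) \<Rightarrow> nat \<Rightarrow> ('e \<Rightarrow> nat) \<Rightarrow> ('v \<Rightarrow> nat \<Rightarrow> real) \<Rightarrow> 'e \<Rightarrow> nat \<Rightarrow> real" where
  "color_threshold nodes k l x e i =
     (if i = 0 then 0
      else sort (map (color_min nodes x e) (filter (\<lambda>j. j \<noteq> l e) [1..<k+1])) ! (i - 1))"

end

theory Submission
  imports Defs "HOL-Library.Multiset"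
begin

lemma sort_map_key: "sort (map f xs) = map f (sort_key f xs)"
  by (rule properties_for_sort) (auto simp: mset_map)

lemma sum_ge_tail:
  fixes g :: "nat \<Rightarrow> real"
  assumes mono: "\<And>i j. i \<le> j \<Longrightarrow> j \<le> 2*t-2 \<Longrightarrow> g j \<le> g i"
    and nonneg: "\<And>i. i \<le> 2*t-2 \<Longrightarrow> 0 \<le> g i"
    and IS: "I \<subseteq> {..2*t-2}" and cI: "card I \<ge> t" and t: "t \<ge> 1"
  shows "(\<Sum>i=t-1..2*t-2. g i) \<le> sum g I"
proof -
  have fI: "finite I" using IS finite_subset by blast
  obtain I' where I': "I' \<subseteq> I" "card I' = t" using obtain_subset_with_card_n[OF cI] by blast
  have fI': "finite I'" using I' fI finite_subset by blast
  have "sum g I' \<le> sum g I" using I' fI IS nonneg by (intro sum_mono2) auto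
  define R where "R = {t-1..2*t-2}"
  have cR: "card R = t" using t unfolding R_def by simp
  have s1: "sum g I' = sum g (I' \<inter> R) + sum g (I' - R)"
    using fI' by (metis Diff_disjoint Int_Diff_Un Int_Diff_disjoint sum.union_disjoint finite_Int finite_Diff inf_commute)
  have s2: "sum g R = sum g (I' \<inter> R) + sum g (R - I')"
    unfolding R_def
    by (metis Int_Diff_Un Int_Diff_disjoint finite_atLeastAtMost finite_Int finite_Diff sum.union_disjoint R_def inf_commute)
  have c1: "card (I' - R) = t - card (I' \<inter> R)"
    using I'(2) fI' by (metis card_Diff_subset_Int Diff_Int2 Int_lower1 finite_Int card_Diff_subset inf_commute)
  have c2: "card (R - I') = t - card (I' \<inter> R)"
    using cR by (metis card_Diff_subset_Int Diff_Int2 Int_lower1 finite_Int card_Diff_subset inf_commute R_def finite_atLeastAtMost)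
  have "sum g (R - I') \<le> (\<Sum>i\<in>R - I'. g (t-1))"
    by (intro sum_mono) (auto simp: R_def intro: mono)
  also have "\<dots> = real (card (R - I')) * g (t-1)" by simp
  also have "\<dots> = real (card (I' - R)) * g (t-1)" using c1 c2 by simp
  also have "\<dots> = (\<Sum>i\<in>I' - R. g (t-1))" by simp
  also have "\<dots> \<le> sum g (I' - R)"
  proof (intro sum_mono)
    fix i assume "i \<in> I' - R"
    hence "i < t - 1" using I' IS by (auto simp: R_def)
    thus "g (t-1) \<le> g i" using t by (intro mono) auto
  qed
  finally have "sum g R \<le> sum g I" using s1 s2 \<open>sum g I' \<le> sum g I\<close> by linarith
  thus ?thesis by (simp add: R_def)
qed

theorem lemma3:
  fixes V :: "'v set" and E :: "'e set" and nodes :: "'e \<Rightarrow> 'v set"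
    and k :: nat and l :: "'e \<Rightarrow> nat"
    and x :: "'v \<Rightarrow> nat \<Rightarrow> real" and xe :: "'e \<Rightarrow> real"
    and e :: 'e and u v :: 'v and t :: nat
  assumes "edge_colored_graph V E nodes k l"
    and "minecc_lp_feasible V E nodes k l x xe"
    and "e \<in> E" and "nodes e = {u, v}"
    and "xe e = max (x u (l e)) (x v (l e))"
    and "1 \<le> t" and "real t \<le> real k / 2"
  shows "real t \<le> xe e + (\<Sum>i=t..2*t-1. color_threshold nodes k l x e i)"
proof -
  define c where "c = l e"
  have cin: "c \<in> {1..k}" and uvV: "u \<in> V" "v \<in> V"
    using assms(1,3,4) unfolding edge_colored_graph_def edge_colored_hypergraph_def c_def by auto
  have bnd: "\<And>w i. w \<in> V \<Longrightarrow> i \<in> {1..k} \<Longrightarrow> 0 \<le> x w i \<and> x w i \<le> 1"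
    and sumk: "\<And>w. w \<in> V \<Longrightarrow> (\<Sum>i=1..k. x w i) = real k - 1"
    using assms(2) unfolding minecc_lp_feasible_def by auto
  have tk: "2*t \<le> k" using assms(7) by linarith
  define m where "m = color_min nodes x e"
  have m: "\<And>j. m j = min (x u j) (x v j)"
    unfolding m_def color_min_def using assms(4) by simp
  define L where "L = filter (\<lambda>j. j \<noteq> c) [1..<k+1]"
  have setL: "set L = {1..k} - {c}" unfolding L_def by auto
  have distL: "distinct L" unfolding L_def by simp
  have lenL: "length L = k - 1"
    using distinct_card[OF distL] setL cin by simp
  define L' where "L' = sort_key m L"
  define zs where "zs = sort (map m L)"
  have zs: "zs = map m L'" unfolding zs_def L'_def by (rule sort_map_key)
  have lenL': "length L' = k - 1" unfolding L'_def using lenL by simp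
  have distL': "distinct L'" unfolding L'_def using distL by simp
  have setL': "set L' = {1..k} - {c}" unfolding L'_def using setL by simp
  have sorted: "sorted zs" unfolding zs_def by simp
  define col where "col i = L' ! i" for i
  have colin: "\<And>i. i < k - 1 \<Longrightarrow> col i \<in> {1..k} - {c}"
    unfolding col_def using lenL' setL' nth_mem by metis
  have colinj: "inj_on col {..<k-1}"
    unfolding col_def inj_on_def using distL' lenL' nth_eq_iff_index_eq by fastforce
  have zsi: "\<And>i. i < k - 1 \<Longrightarrow> zs ! i = m (col i)"
    unfolding zs col_def using lenL' by simp
  have ct: "\<And>i. i \<ge> 1 \<Longrightarrow> color_threshold nodes k l x e i = zs ! (i - 1)"
    unfolding color_threshold_def zs_def L_def m_def c_def by simp
  define g where "g i = 1 - zs ! i" for i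
  define R where "R = {t-1..2*t-2}"
  have small: "\<And>i. i \<le> 2*t-2 \<Longrightarrow> i < k - 1" using tk assms(6) by linarith
  have gmono: "\<And>i j. i \<le> j \<Longrightarrow> j \<le> 2*t-2 \<Longrightarrow> g j \<le> g i"
    unfolding g_def using sorted small lenL' zs
    by (metis diff_left_mono length_map sorted_nth_mono)
  have gnn: "\<And>i. i \<le> 2*t-2 \<Longrightarrow> 0 \<le> g i"
  proof -
    fix i assume "i \<le> 2*t-2"
    hence "i < k - 1" by (rule small)
    hence "zs ! i \<le> x u (col i)" "x u (col i) \<le> 1"
      using zsi m colin bnd uvV by auto
    thus "0 \<le> g i" unfolding g_def by simp
  qed
  have key: "sum g R \<le> xe e"
    if w: "w \<in> V" and xw: "x w c \<le> xe e" and IS: "I \<subseteq> {..2*t-2}" and cI: "card I \<ge> t"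
      and gI: "\<And>i. i \<in> I \<Longrightarrow> g i = 1 - x w (col i)" for w I
  proof -
    have Ik: "I \<subseteq> {..<k-1}" using IS small by auto
    have "sum g R \<le> sum g I" unfolding R_def
      by (rule sum_ge_tail[OF gmono gnn IS cI assms(6)])
    also have "\<dots> = (\<Sum>i\<in>I. 1 - x w (col i))" using gI by simp
    also have "\<dots> = (\<Sum>j\<in>col ` I. 1 - x w j)"
      using sum.reindex[of col I "\<lambda>j. 1 - x w j"] inj_on_subset[OF colinj Ik] by simp
    also have "\<dots> \<le> (\<Sum>j\<in>{1..k} - {c}. 1 - x w j)"
      using colin Ik bnd[OF w] by (intro sum_mono2) auto
    also have "\<dots> = (\<Sum>j\<in>{1..k} - {c}. 1) - (\<Sum>j\<in>{1..k} - {c}. x w j)"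
      by (simp add: sum_subtractf)
    also have "(\<Sum>j\<in>{1..k} - {c}. x w j) = (\<Sum>j=1..k. x w j) - x w c"
      using cin by (simp add: sum_diff1)
    also have "(\<Sum>j\<in>{1..k} - {c}. (1::real)) = real k - 1"
      using cin by simp
    finally show ?thesis using sumk[OF w] xw by simp
  qed
  define Iu where "Iu = {i \<in> {..2*t-2}. x u (col i) \<le> x v (col i)}"
  define Iv where "Iv = {..2*t-2} - Iu"
  have "card Iu + card Iv = 2*t-1"
  proof -
    have "card Iu + card Iv = card (Iu \<union> Iv)"
      unfolding Iv_def Iu_def by (intro card_Un_disjoint[symmetric]) auto
    also have "Iu \<union> Iv = {..2*t-2}" unfolding Iv_def Iu_def by auto
    finally show ?thesis using assms(6) by simp
  qed
  hence "card Iu \<ge> t \<or> card Iv \<ge> t" by linarith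
  moreover have "x u c \<le> xe e" "x v c \<le> xe e" using assms(5) c_def by auto
  ultimately have main: "sum g R \<le> xe e"
  proof (elim disjE)
    assume "t \<le> card Iu"
    show ?thesis
    proof (rule key[OF uvV(1) \<open>x u c \<le> xe e\<close> _ \<open>t \<le> card Iu\<close>])
      show "Iu \<subseteq> {..2*t-2}" unfolding Iu_def by auto
      fix i assume "i \<in> Iu"
      thus "g i = 1 - x u (col i)" unfolding Iu_def g_def using zsi m small by auto
    qed
  next
    assume "t \<le> card Iv"
    show ?thesis
    proof (rule key[OF uvV(2) \<open>x v c \<le> xe e\<close> _ \<open>t \<le> card Iv\<close>])
      show "Iv \<subseteq> {..2*t-2}" unfolding Iv_def by auto
      fix i assume "i \<in> Iv"
      thus "g i = 1 - x v (col i)" unfolding Iv_def Iu_def g_def using zsi m small by auto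
    qed
  qed
  have "(\<Sum>i=t..2*t-1. color_threshold nodes k l x e i) = (\<Sum>i=t..2*t-1. zs ! (i - 1))"
    using assms(6) ct by (intro sum.cong) auto
  also have "\<dots> = (\<Sum>i\<in>R. zs ! i)"
  proof -
    have "{t..2*t-1} = Suc ` R" unfolding R_def using assms(6)
      by (auto simp: image_iff intro!: bexI[where x="_ - 1"])
    thus ?thesis by (simp add: sum.reindex)
  qed
  finally have eq: "(\<Sum>i=t..2*t-1. color_threshold nodes k l x e i) = (\<Sum>i\<in>R. zs ! i)" .
  have "sum g R = real t - (\<Sum>i\<in>R. zs ! i)"
    unfolding g_def R_def using assms(6) by (simp add: sum_subtractf)
  thus ?thesis using eq main by linarith
qed

end
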